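(* Let $\rho>0$ and $(l,m,n)\in\mathbb{Z}_+^3$ with $n+\min\{l,m\}\ge1$. With $\tau=\inf\{s\ge0:(a(s),b(s),c(s))\in\mathcal S\}$, $\mathcal S=\{(0,0,1),(1,1,0)\}$, $\mathbb{E}_{l,m,n,0}[s(\tau)]=\frac{\rho}{2}\mathbb{E}_{l,m,n,0}\Bigl[\int_0^\tau c(u)\,du\Bigr]=\frac{\rho}{2}\sum_{(l',m',n')\in\mathbb{Z}_+^3\setminus(\{\mathbf 0\}\cup\mathcal S)}\int_0^\infty n'\,\mathbb{P}_{l,m,n,0}[(a(u),b(u),c(u))=(l',m',n')]\,du$.
   Context: The ancestral chain $(a(t),b(t),c(t))$ with parameter $\rho$ is the continuous-time Markov chain on $\mathbb{Z}_+^3\setminus\{\mathbf 0\}$ which from $(a,b,c)$ jumps to $(a+1,b+1,c-1)$ at rate $c\rho/2$ (a recombination event), to $(a-1,b-1,c+1)$ at rate $ab$, to $(a-1,b,c)$ at rate $ac+a(a-1)/2$, to $(a,b-1,c)$ at rate $bc+b(b-1)/2$, and to $(a,b,c-1)$ at rate $c(c-1)/2$. $s(t)$ is the number of recombination jumps in $(0,t)$; subscript $l,m,n,0$ means initial state $(l,m,n)$ and $s(0)=0$. *)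

theory Defs
  imports "HOL-Probability.Probability"
begin

type_synonym state = "nat \<times> nat \<times> nat"

text \<open>Transitions out of state (a,b,c): list of (rate, (is_recombination, target)).\<close>
fun anc_rates :: "real \<Rightarrow> state \<Rightarrow> (real \<times> bool \<times> state) list" where
  "anc_rates \<rho> (a, b, c) =
     [ (real c * \<rho> / 2, (True, (a + 1, b + 1, c - 1))),
       (real a * real b, (False, (a - 1, b - 1, c + 1))),
       (real a * real c + real a * (real a - 1) / 2, (False, (a - 1, b, c))),
       (real b * real c + real b * (real b - 1) / 2, (False, (a, b - 1, c))),
       (real c * (real c - 1) / 2, (False, (a, b, c - 1))) ]"

definition anc_qtot :: "real \<Rightarrow> state \<Rightarrow> real" where
  "anc_qtot \<rho> x = sum_list (map fst (anc_rates \<rho> x))"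

text \<open>Inverse-CDF selection of a transition from a list of rates.\<close>
fun pick :: "(real \<times> 'a) list \<Rightarrow> real \<Rightarrow> 'a option" where
  "pick [] t = None"
| "pick ((r, y) # rs) t = (if t < r then Some y else pick rs (t - r))"

text \<open>Jump of the embedded chain from x driven by a uniform variable u in [0,1].\<close>
definition anc_jump :: "real \<Rightarrow> state \<Rightarrow> real \<Rightarrow> bool \<times> state" where
  "anc_jump \<rho> x u = (case pick (anc_rates \<rho> x) (u * anc_qtot \<rho> x) of
       None \<Rightarrow> (False, x) | Some z \<Rightarrow> z)"

definition anc_driver :: "(real \<times> real) stream measure" where
  "anc_driver = stream_space
     (uniform_measure lborel {0..1::real} \<Otimes>\<^sub>M density lborel (exponential_density 1))"

primrec anc_jc :: "real \<Rightarrow> state \<Rightarrow> (real \<times> real) stream \<Rightarrow> nat \<Rightarrow> state" where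
  "anc_jc \<rho> x0 \<omega> 0 = x0"
| "anc_jc \<rho> x0 \<omega> (Suc k) = snd (anc_jump \<rho> (anc_jc \<rho> x0 \<omega> k) (fst (\<omega> !! k)))"

text \<open>Whether the k-th jump (occurring at time anc_jt (Suc k)) is a recombination.\<close>
definition anc_recomb :: "real \<Rightarrow> state \<Rightarrow> (real \<times> real) stream \<Rightarrow> nat \<Rightarrow> bool" where
  "anc_recomb \<rho> x0 \<omega> k = fst (anc_jump \<rho> (anc_jc \<rho> x0 \<omega> k) (fst (\<omega> !! k)))"

definition anc_hold :: "real \<Rightarrow> state \<Rightarrow> (real \<times> real) stream \<Rightarrow> nat \<Rightarrow> ereal" where
  "anc_hold \<rho> x0 \<omega> k =
     (if anc_qtot \<rho> (anc_jc \<rho> x0 \<omega> k) = 0 then \<infinity>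
      else ereal (snd (\<omega> !! k) / anc_qtot \<rho> (anc_jc \<rho> x0 \<omega> k)))"

definition anc_jt :: "real \<Rightarrow> state \<Rightarrow> (real \<times> real) stream \<Rightarrow> nat \<Rightarrow> ereal" where
  "anc_jt \<rho> x0 \<omega> k = (\<Sum>i<k. anc_hold \<rho> x0 \<omega> i)"

text \<open>Position (a(t),b(t),c(t)) of the continuous-time chain (right-continuous);
  the dummy value (0,0,0) is used after a (null-probability) explosion.\<close>
definition anc_pos :: "real \<Rightarrow> state \<Rightarrow> (real \<times> real) stream \<Rightarrow> real \<Rightarrow> state" where
  "anc_pos \<rho> x0 \<omega> t =
     (if \<exists>k. ereal t < anc_jt \<rho> x0 \<omega> (Suc k)
      then anc_jc \<rho> x0 \<omega> (LEAST k. ereal t < anc_jt \<rho> x0 \<omega> (Suc k))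
      else (0, 0, 0))"

text \<open>s(t): number of recombination jumps in the open interval (0,t).\<close>
definition anc_nrec :: "real \<Rightarrow> state \<Rightarrow> (real \<times> real) stream \<Rightarrow> ereal \<Rightarrow> ennreal" where
  "anc_nrec \<rho> x0 \<omega> t =
     (\<Sum>k. if anc_recomb \<rho> x0 \<omega> k \<and> 0 < anc_jt \<rho> x0 \<omega> (Suc k) \<and> anc_jt \<rho> x0 \<omega> (Suc k) < t
          then 1 else 0)"

definition anc_S :: "state set" where
  "anc_S = {(0, 0, 1), (1, 1, 0)}"

definition anc_tau :: "real \<Rightarrow> state \<Rightarrow> (real \<times> real) stream \<Rightarrow> ereal" where
  "anc_tau \<rho> x0 \<omega> = Inf {ereal t | t. 0 \<le> t \<and> anc_pos \<rho> x0 \<omega> t \<in> anc_S}"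

end

theory Submission
  imports Defs
begin


abbreviation "M0 \<equiv> uniform_measure lborel {0..1::real} \<Otimes>\<^sub>M density lborel (exponential_density 1)"

lemma prob_M1: "prob_space (uniform_measure lborel {0..1::real})"
  by (intro prob_space_uniform_measure) auto

lemma prob_M2: "prob_space (density lborel (exponential_density 1))"
  by (rule prob_space_exponential_density) simp

lemma prob_M0: "prob_space M0"
proof -
  interpret A: prob_space "uniform_measure lborel {0..1::real}" by (rule prob_M1)
  interpret B: prob_space "density lborel (exponential_density 1)" by (rule prob_M2)
  interpret pair_prob_space "uniform_measure lborel {0..1::real}" "density lborel (exponential_density 1)" ..
  show ?thesis by (rule prob_space_axioms)
qed

lemma driver_def': "anc_driver = stream_space M0" by (simp add: anc_driver_def)

lemma prob_D: "prob_space anc_driver"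
  unfolding anc_driver_def by (rule prob_space.prob_space_stream_space[OF prob_M0])

lemma jc_shift: "anc_jc \<rho> x0 \<omega> (Suc k) = anc_jc \<rho> (snd (anc_jump \<rho> x0 (fst (shd \<omega>)))) (stl \<omega>) k"
  by (induction k) auto

lemma measurable_pick:
  assumes "f \<in> borel_measurable M"
  shows "(\<lambda>\<omega>. pick rs (f \<omega>)) \<in> measurable M (count_space UNIV)"
  using assms
proof (induction rs arbitrary: f)
  case Nil then show ?case by simp
next
  case (Cons p rs)
  obtain r y where p: "p = (r, y)" by fastforce
  have *: "(\<lambda>\<omega>. f \<omega> - r) \<in> borel_measurable M" using Cons.prems by measurable
  have "(\<lambda>\<omega>. if f \<omega> < r then Some y else pick rs (f \<omega> - r)) \<in> measurable M (count_space UNIV)"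
    by (rule measurable_If) (use Cons * in auto)
  then show ?case by (simp add: p)
qed

lemma measurable_jump[measurable]:
  "(\<lambda>u. anc_jump \<rho> x u) \<in> measurable borel (count_space UNIV)"
proof -
  have "(\<lambda>u. pick (anc_rates \<rho> x) (u * anc_qtot \<rho> x)) \<in> measurable borel (count_space UNIV)"
    by (rule measurable_pick) measurable
  from measurable_compose[OF this measurable_count_space, of "case_option (False, x) id"]
  show ?thesis unfolding anc_jump_def id_def by simp
qed

lemma measurable_jump_comp:
  assumes "f \<in> borel_measurable M"
  shows "(\<lambda>\<omega>. g (anc_jump \<rho> x (f \<omega>))) \<in> measurable M (count_space UNIV)"
  using measurable_compose[OF measurable_compose[OF assms measurable_jump] measurable_count_space, of g] by simp


lemma measurable_jc[measurable]:
  "(\<lambda>\<omega>. anc_jc \<rho> x0 \<omega> k) \<in> measurable (stream_space M0) (count_space UNIV)"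
proof (induction k)
  case 0 then show ?case by simp
next
  case (Suc k)
  have "(\<lambda>\<omega>. (\<lambda>x \<omega>. snd (anc_jump \<rho> x (fst (\<omega> !! k)))) (anc_jc \<rho> x0 \<omega> k) \<omega>) \<in> measurable (stream_space M0) (count_space UNIV)"
    by (rule measurable_compose_countable[OF _ Suc], rule measurable_jump_comp) measurable
  then show ?case by simp
qed

definition Bk :: "real \<Rightarrow> state \<Rightarrow> (real \<times> real) stream \<Rightarrow> nat \<Rightarrow> bool" where
  "Bk \<rho> x0 \<omega> k = (\<forall>j\<le>k. anc_jc \<rho> x0 \<omega> j \<notin> anc_S)"

definition Phi :: "real \<Rightarrow> (state \<Rightarrow> real \<times> real \<Rightarrow> ennreal) \<Rightarrow> state \<Rightarrow> nat \<Rightarrow> (real \<times> real) stream \<Rightarrow> ennreal" where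
  "Phi \<rho> g x0 k \<omega> = (if Bk \<rho> x0 \<omega> k then g (anc_jc \<rho> x0 \<omega> k) (\<omega> !! k) else 0)"

lemma Bk_0: "Bk \<rho> x0 \<omega> 0 = (x0 \<notin> anc_S)"
  by (simp add: Bk_def)

lemma Bk_Suc: "Bk \<rho> x0 \<omega> (Suc k) = (x0 \<notin> anc_S \<and> Bk \<rho> (snd (anc_jump \<rho> x0 (fst (shd \<omega>)))) (stl \<omega>) k)"
  unfolding Bk_def
proof safe
  fix j assume "\<forall>j\<le>Suc k. anc_jc \<rho> x0 \<omega> j \<notin> anc_S" "j \<le> k"
    "anc_jc \<rho> (snd (anc_jump \<rho> x0 (fst (shd \<omega>)))) (stl \<omega>) j \<in> anc_S"
  then show False using jc_shift[of \<rho> x0 \<omega> j] by (metis Suc_le_mono)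
next
  assume "\<forall>j\<le>Suc k. anc_jc \<rho> x0 \<omega> j \<notin> anc_S" "x0 \<in> anc_S"
  then show False by (metis anc_jc.simps(1) le0)
next
  fix j assume "x0 \<notin> anc_S" "\<forall>j\<le>k. anc_jc \<rho> (snd (anc_jump \<rho> x0 (fst (shd \<omega>)))) (stl \<omega>) j \<notin> anc_S"
    "j \<le> Suc k" "anc_jc \<rho> x0 \<omega> j \<in> anc_S"
  then show False using jc_shift[of \<rho> x0 \<omega> "j - 1"]
    by (cases j) auto
qed

lemma measurable_Bk[measurable]: "Measurable.pred (stream_space M0) (\<lambda>\<omega>. Bk \<rho> x0 \<omega> k)"
  unfolding Bk_def by measurable

lemma measurable_Phi[measurable]:
  assumes "\<And>x. g x \<in> borel_measurable M0"
  shows "Phi \<rho> g x0 k \<in> borel_measurable (stream_space M0)"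
proof -
  have "(\<lambda>\<omega>. (\<lambda>x \<omega>. g x (\<omega> !! k)) (anc_jc \<rho> x0 \<omega> k) \<omega>) \<in> borel_measurable (stream_space M0)"
    by (rule measurable_compose_countable[OF _ measurable_jc]) (use assms in measurable)
  then show ?thesis unfolding Phi_def[abs_def]
    by (intro measurable_If) auto
qed

lemma Phi_0_Stream: "Phi \<rho> g x0 0 (z ## \<omega>) = (if x0 \<notin> anc_S then g x0 z else 0)"
  by (simp add: Phi_def Bk_0)

lemma Phi_Suc_Stream: "Phi \<rho> g x0 (Suc k) (z ## \<omega>) =
   (if x0 \<notin> anc_S then Phi \<rho> g (snd (anc_jump \<rho> x0 (fst z))) k \<omega> else 0)"
  unfolding Phi_def Bk_Suc jc_shift by simp

lemma Phi_int_0: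
  assumes "\<And>x. g x \<in> borel_measurable M0"
  shows "(\<integral>\<^sup>+\<omega>. Phi \<rho> g x0 0 \<omega> \<partial>stream_space M0) = (if x0 \<notin> anc_S then (\<integral>\<^sup>+z. g x0 z \<partial>M0) else 0)"
proof -
  interpret P: prob_space M0 by (rule prob_M0)
  interpret S: prob_space "stream_space M0" by (rule P.prob_space_stream_space)
  have "(\<integral>\<^sup>+\<omega>. Phi \<rho> g x0 0 \<omega> \<partial>stream_space M0) = (\<integral>\<^sup>+z. (\<integral>\<^sup>+\<omega>. Phi \<rho> g x0 0 (z ## \<omega>) \<partial>stream_space M0) \<partial>M0)"
    by (rule P.nn_integral_stream_space) (use assms in measurable)
  also have "\<dots> = (\<integral>\<^sup>+z. (if x0 \<notin> anc_S then g x0 z else 0) \<partial>M0)"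
    by (simp add: Phi_0_Stream S.emeasure_space_1)
  finally show ?thesis by simp
qed

lemma Phi_int_Suc:
  assumes "\<And>x. g x \<in> borel_measurable M0"
  shows "(\<integral>\<^sup>+\<omega>. Phi \<rho> g x0 (Suc k) \<omega> \<partial>stream_space M0) = (if x0 \<notin> anc_S then
     (\<integral>\<^sup>+z. (\<integral>\<^sup>+\<omega>. Phi \<rho> g (snd (anc_jump \<rho> x0 (fst z))) k \<omega> \<partial>stream_space M0) \<partial>M0) else 0)"
proof -
  interpret P: prob_space M0 by (rule prob_M0)
  have "(\<integral>\<^sup>+\<omega>. Phi \<rho> g x0 (Suc k) \<omega> \<partial>stream_space M0) = (\<integral>\<^sup>+z. (\<integral>\<^sup>+\<omega>. Phi \<rho> g x0 (Suc k) (z ## \<omega>) \<partial>stream_space M0) \<partial>M0)"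
    by (rule P.nn_integral_stream_space) (use assms in measurable)
  then show ?thesis by (simp add: Phi_Suc_Stream)
qed

lemma Phi_GL:
  assumes "\<And>x. g x \<in> borel_measurable M0"
  shows "(\<integral>\<^sup>+\<omega>. Phi \<rho> g x0 k \<omega> \<partial>stream_space M0) =
         (\<integral>\<^sup>+\<omega>. Phi \<rho> (\<lambda>x z. \<integral>\<^sup>+z'. g x z' \<partial>M0) x0 k \<omega> \<partial>stream_space M0)"
proof (induction k arbitrary: x0)
  case 0
  interpret P: prob_space M0 by (rule prob_M0)
  show ?case
    by (simp add: Phi_int_0[OF assms] Phi_int_0[of "\<lambda>x z. \<integral>\<^sup>+z'. g x z' \<partial>M0"] P.emeasure_space_1)
next
  case (Suc k)
  show ?case
    by (simp add: Phi_int_Suc[OF assms] Phi_int_Suc[of "\<lambda>x z. \<integral>\<^sup>+z'. g x z' \<partial>M0"] Suc)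
qed



lemma qtot_eq: "anc_qtot \<rho> (a, b, c) = real c * \<rho> / 2 + real a * real b +
   (real a * real c + real a * (real a - 1) / 2) + (real b * real c + real b * (real b - 1) / 2) +
   real c * (real c - 1) / 2"
  by (simp add: anc_qtot_def)

lemma tri_nonneg: "0 \<le> real a * (real a - 1) / 2"
  by (cases a) auto

lemma qtot_ge: "\<rho> \<ge> 0 \<Longrightarrow> anc_qtot \<rho> (a, b, c) \<ge> real c * \<rho> / 2"
  unfolding qtot_eq using tri_nonneg[of a] tri_nonneg[of b] tri_nonneg[of c]
  by (simp add: add_nonneg_nonneg)

lemma qtot_nonneg: "\<rho> \<ge> 0 \<Longrightarrow> anc_qtot \<rho> x \<ge> 0"
  using qtot_ge[of \<rho>] by (cases x) (metis (no_types, lifting) mult_nonneg_nonneg of_nat_0_le_iff order_trans divide_nonneg_pos zero_less_numeral)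

lemma c_pos_q_pos: "\<rho> > 0 \<Longrightarrow> snd (snd x) > 0 \<Longrightarrow> anc_qtot \<rho> x > 0"
proof -
  obtain a b c where x: "x = (a, b, c)" by (cases x) auto
  assume "\<rho> > 0" "snd (snd x) > 0"
  then have "real c * \<rho> / 2 > 0" using x by simp
  then show ?thesis using qtot_ge[where \<rho>=\<rho> and a=a and b=b and c=c] \<open>\<rho> > 0\<close> x by fastforce
qed

lemma pick_False: "(\<forall>p\<in>set rs. \<not> fst (snd p)) \<Longrightarrow> pick rs t = Some z \<Longrightarrow> \<not> fst z"
proof (induction rs arbitrary: t)
  case Nil then show ?case by simp
next
  case (Cons p rs) then show ?case by (cases p) (auto split: if_splits)
qed

lemma rates_split: "anc_rates \<rho> (a, b, c) = (real c * \<rho> / 2, (True, (a + 1, b + 1, c - 1))) # tl (anc_rates \<rho> (a, b, c))"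
  by simp

lemma rates_tl_False: "\<forall>p\<in>set (tl (anc_rates \<rho> (a, b, c))). \<not> fst (snd p)"
  by simp

lemma jump_eq: "anc_jump \<rho> (a, b, c) u =
   (if u * anc_qtot \<rho> (a, b, c) < real c * \<rho> / 2 then (True, (a + 1, b + 1, c - 1))
    else (case pick (tl (anc_rates \<rho> (a, b, c))) (u * anc_qtot \<rho> (a, b, c) - real c * \<rho> / 2) of
            None \<Rightarrow> (False, (a, b, c)) | Some z \<Rightarrow> z))"
  unfolding anc_jump_def by (subst rates_split) (simp only: pick.simps, auto)

lemma jump_fst: "fst (anc_jump \<rho> (a, b, c) u) \<longleftrightarrow> u * anc_qtot \<rho> (a, b, c) < real c * \<rho> / 2"
  unfolding jump_eq using pick_False[OF rates_tl_False]
  by (auto split: option.splits)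

lemma jump_recomb: "fst (anc_jump \<rho> (a, b, c) u) \<Longrightarrow> snd (anc_jump \<rho> (a, b, c) u) = (a + 1, b + 1, c - 1)"
  using jump_fst[of \<rho> a b c u] unfolding jump_eq by auto

lemma q0_rates:
  assumes "\<rho> > 0" "anc_qtot \<rho> (a, b, c) = 0"
  shows "c = 0" "real a * real b = 0" "real a * real c + real a * (real a - 1) / 2 = 0"
        "real b * real c + real b * (real b - 1) / 2 = 0" "real c * (real c - 1) / 2 = 0"
proof -
  have nn: "0 \<le> real c * \<rho> / 2" "0 \<le> real a * real b" "0 \<le> real a * real c + real a * (real a - 1) / 2"
        "0 \<le> real b * real c + real b * (real b - 1) / 2" "0 \<le> real c * (real c - 1) / 2"
    using tri_nonneg[of a] tri_nonneg[of b] tri_nonneg[of c] assms(1) by auto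
  have s: "real c * \<rho> / 2 + real a * real b +
   (real a * real c + real a * (real a - 1) / 2) + (real b * real c + real b * (real b - 1) / 2) +
   real c * (real c - 1) / 2 = 0" using assms(2) qtot_eq by simp
  have "real c * \<rho> / 2 = 0" using nn s by linarith
  then show "c = 0" using assms(1) by simp
  show "real a * real b = 0" "real a * real c + real a * (real a - 1) / 2 = 0"
        "real b * real c + real b * (real b - 1) / 2 = 0" "real c * (real c - 1) / 2 = 0"
    using nn s by linarith+
qed

lemma jump_q0:
  assumes "\<rho> > 0" "anc_qtot \<rho> x = 0"
  shows "anc_jump \<rho> x u = (False, x)"
proof -
  obtain a b c where x: "x = (a, b, c)" by (cases x) auto
  note q = q0_rates[OF assms(1) assms(2)[unfolded x]]
  have "real a * (real a - 1) = 0" using q(3) q(1) by simp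
  then have "a \<le> 1" by auto
  moreover have "real b * (real b - 1) = 0" using q(4) q(1) by simp
  then have "b \<le> 1" by auto
  moreover have "a = 0 \<or> b = 0" using q(2) by simp
  ultimately have "(a, b) \<in> {(0,0), (0,1), (1,0)}" by auto
  then show ?thesis unfolding x anc_jump_def anc_qtot_def using q(1)
    by (auto split: option.splits if_splits)
qed

lemma jump_closed:
  assumes "\<rho> > 0" "x \<in> anc_S" "u \<in> {0..1}"
  shows "snd (anc_jump \<rho> x u) \<in> anc_S"
  using assms unfolding anc_S_def anc_jump_def anc_qtot_def
  by (auto split: option.splits if_splits)

lemma recomb_notS:
  assumes "\<rho> > 0" "x \<notin> anc_S" "u \<ge> 0" "fst (anc_jump \<rho> x u)"
  shows "snd (anc_jump \<rho> x u) \<notin> anc_S"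
proof -
  obtain a b c where x: "x = (a, b, c)" by (cases x) auto
  have q: "anc_qtot \<rho> x \<ge> 0" using qtot_nonneg assms(1) by simp
  have lt: "u * anc_qtot \<rho> x < real c * \<rho> / 2" using assms(4) jump_fst x by simp
  have "u * anc_qtot \<rho> x \<ge> 0" using q assms(3) by simp
  with lt have "c > 0" by (cases c) auto
  then show ?thesis using jump_recomb[of \<rho> a b c u] assms(2,4) x unfolding anc_S_def
    by auto
qed



lemma S_q_pos: "\<rho> > 0 \<Longrightarrow> x \<in> anc_S \<Longrightarrow> anc_qtot \<rho> x > 0"
  unfolding anc_S_def anc_qtot_def by auto

locale anc_path =
  fixes \<rho> :: real and x0 :: state and \<omega> :: "(real \<times> real) stream"
  assumes rho: "\<rho> > 0" and G: "\<forall>k. fst (\<omega> !! k) \<in> {0..1} \<and> snd (\<omega> !! k) > 0"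
begin

abbreviation X where "X k \<equiv> anc_jc \<rho> x0 \<omega> k"
abbreviation q where "q k \<equiv> anc_qtot \<rho> (X k)"
abbreviation hold where "hold k \<equiv> anc_hold \<rho> x0 \<omega> k"
abbreviation jt where "jt k \<equiv> anc_jt \<rho> x0 \<omega> k"
abbreviation pos where "pos t \<equiv> anc_pos \<rho> x0 \<omega> t"
abbreviation tau where "tau \<equiv> anc_tau \<rho> x0 \<omega>"
abbreviation B where "B k \<equiv> Bk \<rho> x0 \<omega> k"

lemma q_nonneg: "q k \<ge> 0" using qtot_nonneg rho by simp

lemma E_pos: "snd (\<omega> !! k) > 0" using G by auto
lemma U_01: "fst (\<omega> !! k) \<in> {0..1}" using G by auto

lemma hold_pos: "0 < hold k"
proof (cases "q k = 0")
  case True then show ?thesis by (simp add: anc_hold_def)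
next
  case False then have "q k > 0" using q_nonneg[of k] by simp
  then show ?thesis using E_pos[of k] by (simp add: anc_hold_def)
qed

lemma hold_fin: "q k > 0 \<Longrightarrow> hold k = ereal (snd (\<omega> !! k) / q k)"
  by (simp add: anc_hold_def)

lemma jt_0: "jt 0 = 0" by (simp add: anc_jt_def)

lemma jt_Suc: "jt (Suc k) = jt k + hold k" by (simp add: anc_jt_def)

lemma jt_nonneg: "jt k \<ge> 0"
  unfolding anc_jt_def using hold_pos by (intro sum_nonneg) (simp add: order_less_imp_le)

lemma jt_le_Suc: "jt k \<le> jt (Suc k)"
proof -
  have "jt k + 0 \<le> jt k + hold k" using hold_pos[of k] by (intro add_left_mono) simp
  then show ?thesis unfolding jt_Suc by simp
qed

lemma jt_mono: "j \<le> k \<Longrightarrow> jt j \<le> jt k"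
  proof (induction k rule: dec_induct)
  case (step k) show ?case using order_trans[OF step.IH jt_le_Suc[of k]] .
qed simp

lemma X_const: "j \<le> k \<Longrightarrow> q j = 0 \<Longrightarrow> X k = X j"
proof (induction k rule: dec_induct)
  case base then show ?case by simp
next
  case (step k) then show ?case using jump_q0[OF rho, of "X j"] by simp
qed

lemma jt_fin: "q k > 0 \<Longrightarrow> \<exists>r. jt k = ereal r \<and> jt (Suc k) = ereal (r + snd (\<omega> !! k) / q k)"
proof (induction k)
  case 0 then show ?case by (simp add: jt_0 jt_Suc hold_fin)
next
  case (Suc k)
  have "q k > 0"
  proof (rule ccontr)
    assume "\<not> q k > 0" then have "q k = 0" using q_nonneg[of k] by simp
    then have "X (Suc k) = X k" using X_const[of k "Suc k"] by simp
    then show False using Suc.prems \<open>q k = 0\<close> by simp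
  qed
  then obtain r where "jt (Suc k) = ereal r" using Suc.IH by blast
  then show ?case using Suc.prems by (simp add: jt_Suc[of "Suc k"] hold_fin)
qed

lemma jt_strict: "jt k = ereal r \<Longrightarrow> ereal r < jt (Suc k)"
proof -
  assume a: "jt k = ereal r"
  show ?thesis
  proof (cases "hold k")
    case (real h) then have "h > 0" using hold_pos[of k] by simp
    then show ?thesis using a real by (simp add: jt_Suc)
  next
    case PInf then show ?thesis using a by (simp add: jt_Suc)
  next
    case MInf then show ?thesis using hold_pos[of k] by simp
  qed
qed

lemma pos_eq: "jt k \<le> ereal t \<Longrightarrow> ereal t < jt (Suc k) \<Longrightarrow> pos t = X k"
proof -
  assume a: "jt k \<le> ereal t" "ereal t < jt (Suc k)"
  have "(LEAST j. ereal t < jt (Suc j)) = k"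
  proof (rule Least_equality)
    show "ereal t < jt (Suc k)" by fact
  next
    fix j assume "ereal t < jt (Suc j)"
    show "k \<le> j"
    proof (rule ccontr)
      assume "\<not> k \<le> j" then have "jt (Suc j) \<le> jt k" by (intro jt_mono) simp
      then show False using a \<open>ereal t < jt (Suc j)\<close> by simp
    qed
  qed
  then show ?thesis using a unfolding anc_pos_def by auto
qed

lemma least_interval:
  assumes "0 \<le> t" "ereal t < jt (Suc k)"
  defines "j \<equiv> LEAST j. ereal t < jt (Suc j)"
  shows "j \<le> k" "jt j \<le> ereal t" "ereal t < jt (Suc j)"
proof -
  show "j \<le> k" unfolding j_def by (rule Least_le) fact
  show "ereal t < jt (Suc j)" unfolding j_def by (rule LeastI) fact
  show "jt j \<le> ereal t"
  proof (cases j)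
    case 0 then show ?thesis using assms(1) by (simp add: jt_0)
  next
    case (Suc i)
    have "\<not> ereal t < jt (Suc i)" using not_less_Least[of i "\<lambda>j. ereal t < jt (Suc j)"] Suc j_def by simp
    then show ?thesis using Suc by simp
  qed
qed

lemma tau_lower: "B k \<Longrightarrow> jt (Suc k) \<le> tau"
  unfolding anc_tau_def
proof (rule Inf_greatest)
  fix s assume B: "B k" and "s \<in> {ereal t |t. 0 \<le> t \<and> pos t \<in> anc_S}"
  then obtain t where t: "s = ereal t" "0 \<le> t" "pos t \<in> anc_S" by auto
  show "jt (Suc k) \<le> s"
  proof (rule ccontr)
    assume "\<not> jt (Suc k) \<le> s"
    then have lt: "ereal t < jt (Suc k)" using t by simp
    define j where "j = (LEAST j. ereal t < jt (Suc j))"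
    note li = least_interval[OF t(2) lt, folded j_def]
    then have "pos t = X j" by (intro pos_eq)
    moreover have "X j \<notin> anc_S" using B li(1) by (simp add: Bk_def)
    ultimately show False using t by simp
  qed
qed

lemma tau_upper: "X j \<in> anc_S \<Longrightarrow> jt j = ereal t0 \<Longrightarrow> tau \<le> jt j"
proof -
  assume a: "X j \<in> anc_S" "jt j = ereal t0"
  have "t0 \<ge> 0" using jt_nonneg[of j] a by simp
  moreover have "pos t0 = X j" using a jt_strict[of j t0] by (intro pos_eq) auto
  ultimately have "ereal t0 \<in> {ereal t |t. 0 \<le> t \<and> pos t \<in> anc_S}" using a by auto
  then show ?thesis unfolding anc_tau_def using a by (simp add: Inf_lower)
qed

lemma closed: "j \<le> k \<Longrightarrow> X j \<in> anc_S \<Longrightarrow> X k \<in> anc_S"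
proof (induction k rule: dec_induct)
  case base then show ?case by simp
next
  case (step k) then show ?case using jump_closed[OF rho _ U_01] by simp
qed

lemma B_iff: "B k \<longleftrightarrow> X k \<notin> anc_S"
  unfolding Bk_def using closed by auto

lemma jt_fin_le: "jt k \<le> ereal u \<Longrightarrow> \<exists>r. jt k = ereal r"
  using jt_nonneg[of k] by (cases "jt k") auto

lemma tau_iff:
  assumes "jt k \<le> ereal u" "ereal u < jt (Suc k)"
  shows "ereal u < tau \<longleftrightarrow> B k"
proof
  assume "B k" then show "ereal u < tau" using tau_lower[of k] assms(2) by simp
next
  assume u: "ereal u < tau"
  show "B k"
  proof (rule ccontr)
    assume "\<not> B k" then have "X k \<in> anc_S" using B_iff by simp
    moreover obtain r where "jt k = ereal r" using jt_fin_le[OF assms(1)] by blast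
    ultimately have "tau \<le> jt k" by (rule tau_upper)
    then show False using u assms(1) by simp
  qed
qed

lemma recomb_iff:
  "(anc_recomb \<rho> x0 \<omega> k \<and> 0 < jt (Suc k) \<and> jt (Suc k) < tau) \<longleftrightarrow>
   (B k \<and> fst (anc_jump \<rho> (X k) (fst (\<omega> !! k))))"
proof
  assume a: "anc_recomb \<rho> x0 \<omega> k \<and> 0 < jt (Suc k) \<and> jt (Suc k) < tau"
  have "B k"
  proof (rule ccontr)
    assume "\<not> B k" then have S: "X k \<in> anc_S" using B_iff by simp
    then have "q k > 0" using S_q_pos[OF rho] by simp
    then obtain r where "jt k = ereal r" using jt_fin by blast
    then have "tau \<le> jt k" using tau_upper S by blast
    then have "tau \<le> jt (Suc k)" using jt_le_Suc[of k] by (rule order_trans)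
    then show False using a by (meson leD)
  qed
  then show "B k \<and> fst (anc_jump \<rho> (X k) (fst (\<omega> !! k)))" using a by (simp add: anc_recomb_def)
next
  assume a: "B k \<and> fst (anc_jump \<rho> (X k) (fst (\<omega> !! k)))"
  obtain aa bb cc where x: "X k = (aa, bb, cc)" by (cases "X k") auto
  have lt: "fst (\<omega> !! k) * q k < real cc * \<rho> / 2" using a jump_fst x by simp
  have "fst (\<omega> !! k) * q k \<ge> 0" using U_01[of k] q_nonneg[of k] by simp
  with lt have "cc > 0" by (cases cc) auto
  then have qk: "q k > 0" using c_pos_q_pos[OF rho, of "X k"] x by simp
  then obtain r where r: "jt k = ereal r" "jt (Suc k) = ereal (r + snd (\<omega> !! k) / q k)" using jt_fin by blast
  have "r \<ge> 0" using jt_nonneg[of k] r by simp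
  moreover have "snd (\<omega> !! k) / q k > 0" using qk E_pos[of k] by simp
  ultimately have pos: "0 < jt (Suc k)" using r by simp
  have "X (Suc k) \<notin> anc_S"
    using recomb_notS[OF rho _ _ ] a B_iff U_01[of k] by simp
  then have "jt (Suc (Suc k)) \<le> tau" using B_iff tau_lower by blast
  moreover have "jt (Suc k) < jt (Suc (Suc k))" using jt_strict[of "Suc k"] r by simp
  ultimately show "anc_recomb \<rho> x0 \<omega> k \<and> 0 < jt (Suc k) \<and> jt (Suc k) < tau"
    using a pos by (simp add: anc_recomb_def)
qed

lemma interval_unique:
  assumes "jt k0 \<le> ereal u" "ereal u < jt (Suc k0)"
  shows "(jt k \<le> ereal u \<and> ereal u < jt (Suc k)) \<longleftrightarrow> k = k0"
proof
  assume b: "jt k \<le> ereal u \<and> ereal u < jt (Suc k)"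
  show "k = k0"
  proof (rule ccontr)
    assume "k \<noteq> k0"
    then consider "k < k0" | "k0 < k" by linarith
    then show False
    proof cases
      case 1 then have "jt (Suc k) \<le> jt k0" by (intro jt_mono) simp
      then show False using b assms by (meson leD order_trans)
    next
      case 2 then have "jt (Suc k0) \<le> jt k" by (intro jt_mono) simp
      then show False using b assms by (meson leD order_trans)
    qed
  qed
qed (use assms in simp)

lemma no_interval:
  assumes "0 \<le> u" "\<forall>k. \<not> (jt k \<le> ereal u \<and> ereal u < jt (Suc k))"
  shows "pos u = (0, 0, 0)"
proof -
  have "\<not> (\<exists>k. ereal u < jt (Suc k))"
  proof
    assume "\<exists>k. ereal u < jt (Suc k)"
    then obtain k where "ereal u < jt (Suc k)" by blast
    note li = least_interval[OF assms(1) this]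
    then show False using assms(2) by (meson li(2) li(3))
  qed
  then show ?thesis unfolding anc_pos_def by simp
qed

lemma neg_interval: "u < 0 \<Longrightarrow> \<not> (jt k \<le> ereal u)"
proof -
  assume "u < 0" then have "ereal u < 0" by simp
  then have "ereal u < jt k" using jt_nonneg[of k] by (rule less_le_trans)
  then show ?thesis by (simp add: not_le)
qed

lemma sum_single_nat:
  fixes f :: "nat \<Rightarrow> ennreal"
  assumes "\<forall>k. k \<noteq> k0 \<longrightarrow> f k = 0"
  shows "(\<Sum>k. f k) = f k0"
proof -
  have "f = (\<lambda>k. if k = k0 then f k else 0)" using assms by auto
  then have "f sums f k0" using sums_single[of k0 f] by metis
  then show ?thesis by (rule sums_unique[symmetric])
qed

lemma sum_interval:
  fixes a :: "nat \<Rightarrow> ennreal"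
  shows "(\<Sum>k. indicator {u. jt k \<le> ereal u \<and> ereal u < jt (Suc k)} u * a k) =
    (if \<exists>k. jt k \<le> ereal u \<and> ereal u < jt (Suc k) then a (THE k. jt k \<le> ereal u \<and> ereal u < jt (Suc k)) else 0)"
proof (cases "\<exists>k. jt k \<le> ereal u \<and> ereal u < jt (Suc k)")
  case True
  then obtain k0 where k0: "jt k0 \<le> ereal u" "ereal u < jt (Suc k0)" by blast
  note U = interval_unique[OF k0]
  have "(THE k. jt k \<le> ereal u \<and> ereal u < jt (Suc k)) = k0" using U by auto
  moreover have "(\<Sum>k. indicator {u. jt k \<le> ereal u \<and> ereal u < jt (Suc k)} u * a k) = a k0"
    by (subst sum_single_nat[of k0]) (use U in \<open>auto simp: indicator_def\<close>)
  ultimately show ?thesis using True by simp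
next
  case False
  then have "\<And>k. indicator {u. jt k \<le> ereal u \<and> ereal u < jt (Suc k)} u * a k = 0"
    by (simp add: indicator_def)
  then show ?thesis using False by auto
qed

end



definition h1 :: "real \<Rightarrow> state \<Rightarrow> real \<times> real \<Rightarrow> ennreal" where
  "h1 r x z = (if fst (anc_jump r x (fst z)) then 1 else 0)"
definition h2 :: "real \<Rightarrow> state \<Rightarrow> real \<times> real \<Rightarrow> ennreal" where
  "h2 r x z = of_nat (snd (snd x)) * ennreal (snd z / anc_qtot r x)"

context anc_path begin

abbreviation Ik where "Ik k \<equiv> {u. jt k \<le> ereal u \<and> ereal u < jt (Suc k)}"

lemma interval_facts:
  assumes "jt k0 \<le> ereal u" "ereal u < jt (Suc k0)"
  shows "(THE k. jt k \<le> ereal u \<and> ereal u < jt (Suc k)) = k0" "0 \<le> u" "pos u = X k0"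
proof -
  note U = interval_unique[OF assms]
  show "(THE k. jt k \<le> ereal u \<and> ereal u < jt (Suc k)) = k0" using U by auto
  show "0 \<le> u"
  proof (rule ccontr)
    assume "\<not> 0 \<le> u" then show False using neg_interval[of u k0] assms(1) by simp
  qed
  show "pos u = X k0" using pos_eq assms by blast
qed

lemma PW_a:
  "indicator {u. 0 \<le> u \<and> ereal u < tau} u * (of_nat (snd (snd (pos u))) :: ennreal) =
   (\<Sum>k. indicator (Ik k) u * (if B k then of_nat (snd (snd (X k))) else 0))"
proof (cases "\<exists>k. jt k \<le> ereal u \<and> ereal u < jt (Suc k)")
  case True
  then obtain k0 where k0: "jt k0 \<le> ereal u" "ereal u < jt (Suc k0)" by blast
  note f = interval_facts[OF k0]
  show ?thesis unfolding sum_interval using True f tau_iff[OF k0] by (simp add: indicator_def)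
next
  case False
  show ?thesis
  proof (cases "u < 0")
    case True then show ?thesis unfolding sum_interval if_not_P[OF False] using False by (simp add: indicator_def)
  next
    case u: False
    then have "pos u = (0, 0, 0)" using no_interval False by simp
    then show ?thesis unfolding sum_interval if_not_P[OF False] using False by simp
  qed
qed

lemma PW_c:
  "(if 0 \<le> u \<and> pos u \<notin> anc_S then (of_nat (snd (snd (pos u))) :: ennreal) else 0) =
   (\<Sum>k. indicator (Ik k) u * (if B k then of_nat (snd (snd (X k))) else 0))"
proof (cases "\<exists>k. jt k \<le> ereal u \<and> ereal u < jt (Suc k)")
  case True
  then obtain k0 where k0: "jt k0 \<le> ereal u" "ereal u < jt (Suc k0)" by blast
  note f = interval_facts[OF k0]
  show ?thesis unfolding sum_interval using True f B_iff by simp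
next
  case False
  show ?thesis
  proof (cases "u < 0")
    case True then show ?thesis unfolding sum_interval if_not_P[OF False] using False by simp
  next
    case u: False
    then have "pos u = (0, 0, 0)" using no_interval False by simp
    then show ?thesis unfolding sum_interval if_not_P[OF False] using False by simp
  qed
qed

lemma PW_b:
  assumes "y \<noteq> (0, 0, 0)"
  shows "(if 0 \<le> u \<and> pos u = y then 1 else 0 :: ennreal) =
   (\<Sum>k. indicator (Ik k) u * (if X k = y then 1 else 0))"
proof (cases "\<exists>k. jt k \<le> ereal u \<and> ereal u < jt (Suc k)")
  case True
  then obtain k0 where k0: "jt k0 \<le> ereal u" "ereal u < jt (Suc k0)" by blast
  note f = interval_facts[OF k0]
  show ?thesis unfolding sum_interval using True f by simp
next
  case False
  show ?thesis
  proof (cases "u < 0")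
    case True then show ?thesis unfolding sum_interval if_not_P[OF False] using False by simp
  next
    case u: False
    then have "pos u = (0, 0, 0)" using no_interval False by simp
    then show ?thesis unfolding sum_interval using False assms by simp
  qed
qed

lemma nrec_eq: "anc_nrec \<rho> x0 \<omega> tau = (\<Sum>k. Phi \<rho> (h1 \<rho>) x0 k \<omega>)"
  unfolding anc_nrec_def
proof (rule suminf_cong)
  fix k
  show "(if anc_recomb \<rho> x0 \<omega> k \<and> 0 < jt (Suc k) \<and> jt (Suc k) < tau then 1 else 0) = Phi \<rho> (h1 \<rho>) x0 k \<omega>"
    using recomb_iff[of k] by (simp add: Phi_def h1_def)
qed

lemma Ik_meas: "Ik k \<in> sets lborel" by measurable

lemma leb_term: "(if B k then of_nat (snd (snd (X k))) else 0) * emeasure lborel (Ik k) = Phi \<rho> (h2 \<rho>) x0 k \<omega>"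
proof (cases "B k \<and> snd (snd (X k)) > 0")
  case True
  then have qk: "q k > 0" using c_pos_q_pos[OF rho] by simp
  then obtain r where r: "jt k = ereal r" "jt (Suc k) = ereal (r + snd (\<omega> !! k) / q k)" using jt_fin by blast
  have "Ik k = {r ..< r + snd (\<omega> !! k) / q k}" using r by auto
  moreover have "snd (\<omega> !! k) / q k \<ge> 0" using qk E_pos[of k] by simp
  ultimately have "emeasure lborel (Ik k) = ennreal (snd (\<omega> !! k) / q k)" by simp
  then show ?thesis using True by (simp add: Phi_def h2_def)
next
  case False then show ?thesis by (auto simp: Phi_def h2_def)
qed

lemma leb_eq: "(\<integral>\<^sup>+u. indicator {u. 0 \<le> u \<and> ereal u < tau} u * of_nat (snd (snd (pos u))) \<partial>lborel) =
   (\<Sum>k. Phi \<rho> (h2 \<rho>) x0 k \<omega>)"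
proof -
  have "(\<integral>\<^sup>+u. indicator {u. 0 \<le> u \<and> ereal u < tau} u * of_nat (snd (snd (pos u))) \<partial>lborel) =
    (\<integral>\<^sup>+u. (\<Sum>k. indicator (Ik k) u * (if B k then of_nat (snd (snd (X k))) else 0)) \<partial>lborel)"
    by (simp only: PW_a)
  also have "\<dots> = (\<Sum>k. \<integral>\<^sup>+u. indicator (Ik k) u * (if B k then of_nat (snd (snd (X k))) else 0) \<partial>lborel)"
    by (rule nn_integral_suminf) measurable
  also have "\<dots> = (\<Sum>k. Phi \<rho> (h2 \<rho>) x0 k \<omega>)"
  proof (rule suminf_cong)
    fix k
    have "(\<integral>\<^sup>+u. indicator (Ik k) u * (if B k then of_nat (snd (snd (X k))) else 0) \<partial>lborel)
       = (if B k then of_nat (snd (snd (X k))) else 0) * emeasure lborel (Ik k)"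
      by (subst mult.commute) (rule nn_integral_cmult_indicator[OF Ik_meas])
    then show "(\<integral>\<^sup>+u. indicator (Ik k) u * (if B k then of_nat (snd (snd (X k))) else 0) \<partial>lborel) = Phi \<rho> (h2 \<rho>) x0 k \<omega>"
      using leb_term by simp
  qed
  finally show ?thesis .
qed

end



lemma measurable_hold[measurable]:
  "(\<lambda>\<omega>. anc_hold \<rho> x0 \<omega> k) \<in> borel_measurable (stream_space M0)"
proof -
  have "(\<lambda>\<omega>. (\<lambda>x \<omega>. if anc_qtot \<rho> x = 0 then \<infinity> else ereal (snd (\<omega> !! k) / anc_qtot \<rho> x)) (anc_jc \<rho> x0 \<omega> k) \<omega>)
     \<in> borel_measurable (stream_space M0)"
    by (rule measurable_compose_countable[OF _ measurable_jc]) measurable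
  then show ?thesis unfolding anc_hold_def by simp
qed

lemma measurable_jt[measurable]:
  "(\<lambda>\<omega>. anc_jt \<rho> x0 \<omega> k) \<in> borel_measurable (stream_space M0)"
  unfolding anc_jt_def by measurable

lemma measurable_pos[measurable]:
  "(\<lambda>\<omega>. anc_pos \<rho> x0 \<omega> u) \<in> measurable (stream_space M0) (count_space UNIV)"
proof -
  have L: "(\<lambda>\<omega>. LEAST k. ereal u < anc_jt \<rho> x0 \<omega> (Suc k)) \<in> measurable (stream_space M0) (count_space UNIV)"
    by measurable
  have "(\<lambda>\<omega>. (\<lambda>k \<omega>. anc_jc \<rho> x0 \<omega> k) (LEAST k. ereal u < anc_jt \<rho> x0 \<omega> (Suc k)) \<omega>) \<in> measurable (stream_space M0) (count_space UNIV)"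
    by (rule measurable_compose_countable[OF _ L]) measurable
  then show ?thesis unfolding anc_pos_def
    by (intro measurable_If) auto
qed

lemma AE_G: "AE \<omega> in stream_space M0. \<forall>k. fst (\<omega> !! k) \<in> {0..1} \<and> snd (\<omega> !! k) > 0"
proof -
  interpret P: prob_space M0 by (rule prob_M0)
  interpret A: prob_space "uniform_measure lborel {0..1::real}" by (rule prob_M1)
  interpret B: prob_space "density lborel (exponential_density 1)" by (rule prob_M2)
  interpret PP: pair_sigma_finite "uniform_measure lborel {0..1::real}" "density lborel (exponential_density 1)" ..
  have a1: "AE x in uniform_measure lborel {0..1::real}. x \<in> {0..1}"
    by (rule AE_uniform_measureI) auto
  have a2: "AE y in density lborel (exponential_density 1). y > 0"
  proof (subst AE_density)
    show "AE x in lborel. 0 < ennreal (exponential_density 1 x) \<longrightarrow> 0 < x"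
      using AE_lborel_singleton[of 0] by eventually_elim (auto simp: exponential_density_def)
  qed simp
  have "AE z in M0. fst z \<in> {0..1} \<and> snd z > 0"
  proof (rule PP.AE_pair_measure)
    show "{z \<in> space M0. fst z \<in> {0..1} \<and> snd z > 0} \<in> sets M0" by measurable
  qed (use a1 a2 in \<open>auto elim!: eventually_mono\<close>)
  then have "AE \<omega> in stream_space M0. stream_all (\<lambda>z. fst z \<in> {0..1} \<and> snd z > 0) \<omega>"
    by (intro P.AE_stream_all) auto
  then show ?thesis unfolding stream_all_def by simp
qed

lemma H1_eq:
  assumes "\<rho> > 0"
  shows "(\<integral>\<^sup>+z. h1 \<rho> x z \<partial>M0) = ennreal (real (snd (snd x)) * \<rho> / 2 / anc_qtot \<rho> x)"
proof -
  obtain a b c where x: "x = (a, b, c)" by (cases x) auto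
  define Q where "Q = anc_qtot \<rho> x"
  define r where "r = real c * \<rho> / 2"
  have Qr: "r \<le> Q" "0 \<le> r" using qtot_ge[where \<rho>=\<rho> and a=a and b=b and c=c] assms x by (auto simp: Q_def r_def)
  interpret A: prob_space "uniform_measure lborel {0..1::real}" by (rule prob_M1)
  interpret B: prob_space "density lborel (exponential_density 1)" by (rule prob_M2)
  have h1: "h1 \<rho> x z = indicator {u. u * Q < r} (fst z)" for z
    by (simp add: h1_def x jump_fst Q_def r_def indicator_def)
  have "(\<integral>\<^sup>+z. h1 \<rho> x z \<partial>M0) = (\<integral>\<^sup>+u. (\<integral>\<^sup>+e. indicator {u. u * Q < r} u \<partial>density lborel (exponential_density 1)) \<partial>uniform_measure lborel {0..1::real})"
    unfolding h1 by (subst B.nn_integral_fst[symmetric]) (auto simp: split_beta')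
  also have "\<dots> = (\<integral>\<^sup>+u. indicator {u. u * Q < r} u \<partial>uniform_measure lborel {0..1::real})"
    using B.emeasure_space_1 by simp
  also have "\<dots> = (\<integral>\<^sup>+u. indicator {u. u * Q < r} u * indicator {0..1} u \<partial>lborel) / emeasure lborel {0..1::real}"
    by (rule nn_integral_uniform_measure) auto
  also have "\<dots> = emeasure lborel ({u. u * Q < r} \<inter> {0..1})"
    by (simp add: indicator_inter_arith[symmetric] divide_ennreal_def)
  also have "\<dots> = ennreal (r / Q)"
  proof (cases "Q = 0")
    case True then have "r = 0" using Qr by simp
    then have "{u. u * Q < r} \<inter> {0..1::real} = {}" using True by auto
    then show ?thesis using True by simp
  next
    case False then have Qp: "Q > 0" using Qr by simp
    have le1: "u \<le> 1" if "u * Q < r" for u :: real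
    proof (rule ccontr)
      assume "\<not> u \<le> 1" then have "1 * Q < u * Q" using Qp by (intro mult_strict_right_mono) auto
      then show False using that Qr by simp
    qed
    have "{u. u * Q < r} \<inter> {0..1::real} = {0..<r/Q}"
      using Qr Qp le1 by (auto simp: field_simps)
    then show ?thesis using Qp Qr by simp
  qed
  finally show ?thesis by (simp add: r_def Q_def x)
qed

lemma H2_eq:
  assumes "\<rho> > 0"
  shows "(\<integral>\<^sup>+z. h2 \<rho> x z \<partial>M0) = ennreal (real (snd (snd x)) / anc_qtot \<rho> x)"
proof -
  define Q where "Q = anc_qtot \<rho> x"
  define c where "c = real (snd (snd x))"
  have Q0: "Q \<ge> 0" using qtot_nonneg assms by (simp add: Q_def)
  interpret A: prob_space "uniform_measure lborel {0..1::real}" by (rule prob_M1)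
  interpret B: prob_space "density lborel (exponential_density 1)" by (rule prob_M2)
  interpret PP: pair_sigma_finite "uniform_measure lborel {0..1::real}" "density lborel (exponential_density 1)" ..
  have "(\<integral>\<^sup>+z. h2 \<rho> x z \<partial>M0) = (\<integral>\<^sup>+u. (\<integral>\<^sup>+e. ennreal c * ennreal (e / Q) \<partial>density lborel (exponential_density 1)) \<partial>uniform_measure lborel {0..1::real})"
    unfolding h2_def c_def Q_def by (subst B.nn_integral_fst[symmetric]) (auto simp: split_beta' ennreal_of_nat_eq_real_of_nat)
  also have "\<dots> = (\<integral>\<^sup>+e. ennreal c * ennreal (e / Q) \<partial>density lborel (exponential_density 1))"
    using A.emeasure_space_1 by simp
  also have "\<dots> = (\<integral>\<^sup>+e. ennreal (exponential_density 1 e) * (ennreal c * ennreal (e / Q)) \<partial>lborel)"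
    by (rule nn_integral_density) auto
  also have "\<dots> = (\<integral>\<^sup>+e. ennreal (c / Q) * ennreal (erlang_density 0 1 e * e ^ 1) \<partial>lborel)"
  proof (rule nn_integral_cong)
    fix e :: real
    show "ennreal (exponential_density 1 e) * (ennreal c * ennreal (e / Q)) = ennreal (c / Q) * ennreal (erlang_density 0 1 e * e ^ 1)"
    proof (cases "e < 0")
      case True then show ?thesis by (simp add: exponential_density_def)
    next
      case False
      have c0: "c \<ge> 0" by (simp add: c_def)
      have "0 \<le> exponential_density 1 e" by (simp add: exponential_density_def)
      then show ?thesis using False Q0 c0
        by (simp add: ennreal_mult''[symmetric] ennreal_mult'[symmetric] mult_ac)
    qed
  qed
  also have "\<dots> = ennreal (c / Q) * (\<integral>\<^sup>+e. ennreal (erlang_density 0 1 e * e ^ 1) \<partial>lborel)"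
    by (rule nn_integral_cmult) measurable
  also have "\<dots> = ennreal (c / Q)"
    by (subst nn_integral_erlang_ith_moment) auto
  finally show ?thesis by (simp add: c_def Q_def)
qed

lemma H12: "\<rho> > 0 \<Longrightarrow> (\<integral>\<^sup>+z. h1 \<rho> x z \<partial>M0) = ennreal (\<rho> / 2) * (\<integral>\<^sup>+z. h2 \<rho> x z \<partial>M0)"
  unfolding H1_eq H2_eq
  by (simp add: ennreal_mult[symmetric] qtot_nonneg divide_nonneg_nonneg)



lemma h1_meas: "h1 \<rho> x \<in> borel_measurable M0"
proof -
  have "(\<lambda>z. fst (anc_jump \<rho> x (fst z))) \<in> measurable M0 (count_space UNIV)"
    by (rule measurable_jump_comp) measurable
  then have "Measurable.pred M0 (\<lambda>z. fst (anc_jump \<rho> x (fst z)))" by (simp add: pred_def)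
  then show ?thesis unfolding h1_def[abs_def] by measurable
qed

lemma h2_meas: "h2 \<rho> x \<in> borel_measurable M0"
  unfolding h2_def[abs_def] by measurable

lemma path_intro: "\<rho> > 0 \<Longrightarrow> \<forall>k. fst (\<omega> !! k) \<in> {0..1} \<and> snd (\<omega> !! k) > 0 \<Longrightarrow> anc_path \<rho> \<omega>"
  by (simp add: anc_path_def)

definition FF :: "real \<Rightarrow> state \<Rightarrow> (real \<times> real) stream \<Rightarrow> real \<Rightarrow> ennreal" where
  "FF \<rho> x0 \<omega> u = (\<Sum>k. indicator {u. anc_jt \<rho> x0 \<omega> k \<le> ereal u \<and> ereal u < anc_jt \<rho> x0 \<omega> (Suc k)} u *
      (if Bk \<rho> x0 \<omega> k then of_nat (snd (snd (anc_jc \<rho> x0 \<omega> k))) else 0))"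

definition FY :: "real \<Rightarrow> state \<Rightarrow> state \<Rightarrow> (real \<times> real) stream \<Rightarrow> real \<Rightarrow> ennreal" where
  "FY \<rho> x0 y \<omega> u = (\<Sum>k. indicator {u. anc_jt \<rho> x0 \<omega> k \<le> ereal u \<and> ereal u < anc_jt \<rho> x0 \<omega> (Suc k)} u *
      (if anc_jc \<rho> x0 \<omega> k = y then 1 else 0))"

lemma FF_meas: "(\<lambda>p. FF \<rho> x0 (fst p) (snd p)) \<in> borel_measurable (stream_space M0 \<Otimes>\<^sub>M lborel)"
  unfolding FF_def indicator_def by measurable

lemma FY_meas: "(\<lambda>p. FY \<rho> x0 y (fst p) (snd p)) \<in> borel_measurable (stream_space M0 \<Otimes>\<^sub>M lborel)"
  unfolding FY_def indicator_def by measurable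



lemma part1:
  fixes \<rho> :: real and x0 :: state
  assumes rho: "\<rho> > 0"
  shows "(\<integral>\<^sup>+\<omega>. anc_nrec \<rho> x0 \<omega> (anc_tau \<rho> x0 \<omega>) \<partial>anc_driver)
           = ennreal (\<rho> / 2) *
             (\<integral>\<^sup>+\<omega>. (\<integral>\<^sup>+u. indicator {u. 0 \<le> u \<and> ereal u < anc_tau \<rho> x0 \<omega>} u
                        * of_nat (snd (snd (anc_pos \<rho> x0 \<omega> u))) \<partial>lborel) \<partial>anc_driver)"
proof -
  let ?D = "stream_space M0"
  let ?G1 = "\<lambda>x z. \<integral>\<^sup>+z'. h1 \<rho> x z' \<partial>M0"
  let ?G2 = "\<lambda>x z. \<integral>\<^sup>+z'. h2 \<rho> x z' \<partial>M0"
  have ae1: "AE \<omega> in ?D. anc_nrec \<rho> x0 \<omega> (anc_tau \<rho> x0 \<omega>) = (\<Sum>k. Phi \<rho> (h1 \<rho>) x0 k \<omega>)"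
    using AE_G
  proof eventually_elim
    case (elim \<omega>)
    interpret anc_path \<rho> x0 \<omega> by (rule path_intro[OF rho elim])
    show ?case by (rule nrec_eq)
  qed
  have ae2: "AE \<omega> in ?D. (\<integral>\<^sup>+u. indicator {u. 0 \<le> u \<and> ereal u < anc_tau \<rho> x0 \<omega>} u
                        * of_nat (snd (snd (anc_pos \<rho> x0 \<omega> u))) \<partial>lborel) = (\<Sum>k. Phi \<rho> (h2 \<rho>) x0 k \<omega>)"
    using AE_G
  proof eventually_elim
    case (elim \<omega>)
    interpret anc_path \<rho> x0 \<omega> by (rule path_intro[OF rho elim])
    show ?case by (rule leb_eq)
  qed
  have m1: "\<And>x. ?G1 x \<in> borel_measurable M0" by simp
  have m2: "\<And>x. ?G2 x \<in> borel_measurable M0" by simp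
  have "(\<integral>\<^sup>+\<omega>. anc_nrec \<rho> x0 \<omega> (anc_tau \<rho> x0 \<omega>) \<partial>?D) = (\<integral>\<^sup>+\<omega>. (\<Sum>k. Phi \<rho> (h1 \<rho>) x0 k \<omega>) \<partial>?D)"
    by (rule nn_integral_cong_AE[OF ae1])
  also have "\<dots> = (\<Sum>k. \<integral>\<^sup>+\<omega>. Phi \<rho> (h1 \<rho>) x0 k \<omega> \<partial>?D)"
    by (rule nn_integral_suminf) (intro measurable_Phi h1_meas)
  also have "\<dots> = (\<Sum>k. \<integral>\<^sup>+\<omega>. Phi \<rho> ?G1 x0 k \<omega> \<partial>?D)"
    by (intro suminf_cong Phi_GL h1_meas)
  also have "\<dots> = (\<Sum>k. \<integral>\<^sup>+\<omega>. ennreal (\<rho> / 2) * Phi \<rho> ?G2 x0 k \<omega> \<partial>?D)"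
  proof (intro suminf_cong nn_integral_cong)
    fix k \<omega>
    show "Phi \<rho> ?G1 x0 k \<omega> = ennreal (\<rho> / 2) * Phi \<rho> ?G2 x0 k \<omega>"
      by (simp add: Phi_def H12[OF rho])
  qed
  also have "\<dots> = (\<Sum>k. ennreal (\<rho> / 2) * \<integral>\<^sup>+\<omega>. Phi \<rho> ?G2 x0 k \<omega> \<partial>?D)"
    by (intro suminf_cong nn_integral_cmult measurable_Phi m2)
  also have "\<dots> = ennreal (\<rho> / 2) * (\<Sum>k. \<integral>\<^sup>+\<omega>. Phi \<rho> (h2 \<rho>) x0 k \<omega> \<partial>?D)"
    by (simp add: Phi_GL[OF h2_meas])
  also have "\<dots> = ennreal (\<rho> / 2) * (\<integral>\<^sup>+\<omega>. (\<Sum>k. Phi \<rho> (h2 \<rho>) x0 k \<omega>) \<partial>?D)"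
    by (subst nn_integral_suminf) (auto intro: measurable_Phi h2_meas)
  also have "\<dots> = ennreal (\<rho> / 2) * (\<integral>\<^sup>+\<omega>. (\<integral>\<^sup>+u. indicator {u. 0 \<le> u \<and> ereal u < anc_tau \<rho> x0 \<omega>} u
                        * of_nat (snd (snd (anc_pos \<rho> x0 \<omega> u))) \<partial>lborel) \<partial>?D)"
    by (subst nn_integral_cong_AE[OF ae2]) simp_all
  finally show ?thesis by (simp add: anc_driver_def)
qed



lemma FY_meas2: "(\<lambda>p. of_nat (snd (snd y)) * FY \<rho> x0 y (snd p) (fst p)) \<in> borel_measurable (lborel \<Otimes>\<^sub>M stream_space M0)"
  unfolding FY_def indicator_def by measurable

lemma count_single:
  "(\<integral>\<^sup>+y. of_nat (snd (snd y)) * (if 0 \<le> u \<and> p = y then 1 else 0) \<partial>count_space (UNIV - {(0,0,0)} - anc_S)) =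
   (if 0 \<le> u \<and> p \<notin> anc_S then of_nat (snd (snd p)) else (0::ennreal))"
proof (cases "p \<in> UNIV - {(0,0,0)} - anc_S")
  case True
  have "(\<integral>\<^sup>+y. of_nat (snd (snd y)) * (if 0 \<le> u \<and> p = y then 1 else 0) \<partial>count_space (UNIV - {(0,0,0)} - anc_S)) =
        (\<integral>\<^sup>+y. (if 0 \<le> u then of_nat (snd (snd p)) else 0) * indicator {p} y \<partial>count_space (UNIV - {(0,0,0)} - anc_S))"
    by (intro nn_integral_cong) (auto simp: indicator_def)
  also have "\<dots> = (if 0 \<le> u then of_nat (snd (snd p)) else 0) * emeasure (count_space (UNIV - {(0,0,0)} - anc_S)) {p}"
    by (rule nn_integral_cmult_indicator) (use True in auto)
  also have "\<dots> = (if 0 \<le> u then of_nat (snd (snd p)) else 0)"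
    using True by (simp add: emeasure_count_space)
  finally show ?thesis using True by auto
next
  case False
  have "(\<integral>\<^sup>+y. of_nat (snd (snd y)) * (if 0 \<le> u \<and> p = y then 1 else 0) \<partial>count_space (UNIV - {(0,0,0)} - anc_S)) =
        (\<integral>\<^sup>+y. 0 \<partial>count_space (UNIV - {(0,0,0)} - anc_S))"
    by (intro nn_integral_cong) (use False in auto)
  then show ?thesis using False by auto
qed

lemma part2:
  fixes \<rho> :: real and x0 :: state
  assumes rho: "\<rho> > 0"
  shows "(\<integral>\<^sup>+\<omega>. (\<integral>\<^sup>+u. indicator {u. 0 \<le> u \<and> ereal u < anc_tau \<rho> x0 \<omega>} u
                        * of_nat (snd (snd (anc_pos \<rho> x0 \<omega> u))) \<partial>lborel) \<partial>anc_driver)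
      = (\<integral>\<^sup>+y. (\<integral>\<^sup>+u\<in>{0..}. of_nat (snd (snd y))
                        * emeasure anc_driver {\<omega> \<in> space anc_driver. anc_pos \<rho> x0 \<omega> u = y}
                      \<partial>lborel)
              \<partial>count_space (UNIV - {(0, 0, 0)} - anc_S))"
proof -
  let ?D = "stream_space M0"
  let ?I = "UNIV - {(0, 0, 0)} - anc_S"
  let ?g = "\<lambda>y \<omega> u. of_nat (snd (snd y)) * (if 0 \<le> u \<and> anc_pos \<rho> x0 \<omega> u = y then 1 else 0 :: ennreal)"
  interpret D: prob_space ?D by (rule prob_space.prob_space_stream_space[OF prob_M0])
  interpret PS: pair_sigma_finite ?D lborel ..
  have cI: "countable ?I" by simp
  have gm: "(\<lambda>\<omega>. ?g y \<omega> u) \<in> borel_measurable ?D" for y u by measurable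
  have S1: "(\<integral>\<^sup>+\<omega>. (\<integral>\<^sup>+u. indicator {u. 0 \<le> u \<and> ereal u < anc_tau \<rho> x0 \<omega>} u
                        * of_nat (snd (snd (anc_pos \<rho> x0 \<omega> u))) \<partial>lborel) \<partial>?D)
        = (\<integral>\<^sup>+\<omega>. (\<integral>\<^sup>+u. FF \<rho> x0 \<omega> u \<partial>lborel) \<partial>?D)"
  proof (rule nn_integral_cong_AE)
    show "AE \<omega> in ?D. (\<integral>\<^sup>+u. indicator {u. 0 \<le> u \<and> ereal u < anc_tau \<rho> x0 \<omega>} u
                        * of_nat (snd (snd (anc_pos \<rho> x0 \<omega> u))) \<partial>lborel) = (\<integral>\<^sup>+u. FF \<rho> x0 \<omega> u \<partial>lborel)"
      using AE_G
    proof eventually_elim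
      case (elim \<omega>)
      interpret anc_path \<rho> x0 \<omega> by (rule path_intro[OF rho elim])
      show ?case unfolding FF_def by (intro nn_integral_cong) (rule PW_a)
    qed
  qed
  also have S2: "\<dots> = (\<integral>\<^sup>+u. (\<integral>\<^sup>+\<omega>. FF \<rho> x0 \<omega> u \<partial>?D) \<partial>lborel)"
    by (rule PS.Fubini'[symmetric]) (use FF_meas[of \<rho> x0] in \<open>simp add: split_beta'\<close>)
  also have "\<dots> = (\<integral>\<^sup>+u. (\<integral>\<^sup>+y. (\<integral>\<^sup>+\<omega>. of_nat (snd (snd y)) * FY \<rho> x0 y \<omega> u \<partial>?D) \<partial>count_space ?I) \<partial>lborel)"
  proof (rule nn_integral_cong)
    fix u :: real
    have "(\<integral>\<^sup>+\<omega>. FF \<rho> x0 \<omega> u \<partial>?D) = (\<integral>\<^sup>+\<omega>. (\<integral>\<^sup>+y. ?g y \<omega> u \<partial>count_space ?I) \<partial>?D)"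
    proof (rule nn_integral_cong_AE)
      show "AE \<omega> in ?D. FF \<rho> x0 \<omega> u = (\<integral>\<^sup>+y. ?g y \<omega> u \<partial>count_space ?I)"
        using AE_G
      proof eventually_elim
        case (elim \<omega>)
        interpret anc_path \<rho> x0 \<omega> by (rule path_intro[OF rho elim])
        show ?case unfolding FF_def count_single by (rule PW_c[symmetric])
      qed
    qed
    also have "\<dots> = (\<integral>\<^sup>+y. (\<integral>\<^sup>+\<omega>. ?g y \<omega> u \<partial>?D) \<partial>count_space ?I)"
      by (rule nn_integral_count_space_nn_integral[OF cI gm])
    also have "\<dots> = (\<integral>\<^sup>+y. (\<integral>\<^sup>+\<omega>. of_nat (snd (snd y)) * FY \<rho> x0 y \<omega> u \<partial>?D) \<partial>count_space ?I)"
    proof (rule nn_integral_cong)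
      fix y assume "y \<in> space (count_space ?I)"
      then have y0: "y \<noteq> (0, 0, 0)" by auto
      show "(\<integral>\<^sup>+\<omega>. ?g y \<omega> u \<partial>?D) = (\<integral>\<^sup>+\<omega>. of_nat (snd (snd y)) * FY \<rho> x0 y \<omega> u \<partial>?D)"
      proof (rule nn_integral_cong_AE)
        show "AE \<omega> in ?D. ?g y \<omega> u = of_nat (snd (snd y)) * FY \<rho> x0 y \<omega> u"
          using AE_G
        proof eventually_elim
          case (elim \<omega>)
          interpret anc_path \<rho> x0 \<omega> by (rule path_intro[OF rho elim])
          show ?case unfolding FY_def using PW_b[OF y0, of u] by simp
        qed
      qed
    qed
    finally show "(\<integral>\<^sup>+\<omega>. FF \<rho> x0 \<omega> u \<partial>?D) = (\<integral>\<^sup>+y. (\<integral>\<^sup>+\<omega>. of_nat (snd (snd y)) * FY \<rho> x0 y \<omega> u \<partial>?D) \<partial>count_space ?I)" .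
  qed
  also have "\<dots> = (\<integral>\<^sup>+y. (\<integral>\<^sup>+u. (\<integral>\<^sup>+\<omega>. of_nat (snd (snd y)) * FY \<rho> x0 y \<omega> u \<partial>?D) \<partial>lborel) \<partial>count_space ?I)"
  proof (rule nn_integral_count_space_nn_integral[OF cI])
    fix y
    show "(\<lambda>u. \<integral>\<^sup>+\<omega>. of_nat (snd (snd y)) * FY \<rho> x0 y \<omega> u \<partial>?D) \<in> borel_measurable lborel"
      by (rule D.borel_measurable_nn_integral) (use FY_meas2[of y \<rho> x0] in \<open>simp add: split_beta'\<close>)
  qed
  also have "\<dots> = (\<integral>\<^sup>+y. (\<integral>\<^sup>+u\<in>{0..}. of_nat (snd (snd y))
                        * emeasure anc_driver {\<omega> \<in> space anc_driver. anc_pos \<rho> x0 \<omega> u = y}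
                      \<partial>lborel) \<partial>count_space ?I)"
  proof (intro nn_integral_cong)
    fix y u assume "y \<in> space (count_space ?I)"
    then have y0: "y \<noteq> (0, 0, 0)" by auto
    have "(\<integral>\<^sup>+\<omega>. of_nat (snd (snd y)) * FY \<rho> x0 y \<omega> u \<partial>?D) = (\<integral>\<^sup>+\<omega>. ?g y \<omega> u \<partial>?D)"
    proof (rule nn_integral_cong_AE)
      show "AE \<omega> in ?D. of_nat (snd (snd y)) * FY \<rho> x0 y \<omega> u = ?g y \<omega> u"
        using AE_G
      proof eventually_elim
        case (elim \<omega>)
        interpret anc_path \<rho> x0 \<omega> by (rule path_intro[OF rho elim])
        show ?case unfolding FY_def using PW_b[OF y0, of u] by simp
      qed
    qed
    also have "\<dots> = (\<integral>\<^sup>+\<omega>. (of_nat (snd (snd y)) * indicator {0..} u) * indicator {\<omega> \<in> space ?D. anc_pos \<rho> x0 \<omega> u = y} \<omega> \<partial>?D)"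
      by (intro nn_integral_cong) (auto simp: indicator_def)
    also have "\<dots> = (of_nat (snd (snd y)) * indicator {0..} u) * emeasure ?D {\<omega> \<in> space ?D. anc_pos \<rho> x0 \<omega> u = y}"
      by (rule nn_integral_cmult_indicator) measurable
    finally show "(\<integral>\<^sup>+\<omega>. of_nat (snd (snd y)) * FY \<rho> x0 y \<omega> u \<partial>?D) =
       of_nat (snd (snd y)) * emeasure anc_driver {\<omega> \<in> space anc_driver. anc_pos \<rho> x0 \<omega> u = y} * indicator {0..} u"
      by (simp add: anc_driver_def mult_ac)
  qed
  finally show ?thesis by (simp add: anc_driver_def)
qed

theorem corollary5p3:
  fixes \<rho> :: real and l m n :: nat
  assumes "\<rho> > 0" and "n + min l m \<ge> 1"
  shows "(\<integral>\<^sup>+\<omega>. anc_nrec \<rho> (l, m, n) \<omega> (anc_tau \<rho> (l, m, n) \<omega>) \<partial>anc_driver)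
           = ennreal (\<rho> / 2) *
             (\<integral>\<^sup>+\<omega>. (\<integral>\<^sup>+u. indicator {u. 0 \<le> u \<and> ereal u < anc_tau \<rho> (l, m, n) \<omega>} u
                        * of_nat (snd (snd (anc_pos \<rho> (l, m, n) \<omega> u))) \<partial>lborel) \<partial>anc_driver)
       \<and> ennreal (\<rho> / 2) *
             (\<integral>\<^sup>+\<omega>. (\<integral>\<^sup>+u. indicator {u. 0 \<le> u \<and> ereal u < anc_tau \<rho> (l, m, n) \<omega>} u
                        * of_nat (snd (snd (anc_pos \<rho> (l, m, n) \<omega> u))) \<partial>lborel) \<partial>anc_driver)
           = ennreal (\<rho> / 2) *
             (\<integral>\<^sup>+y. (\<integral>\<^sup>+u\<in>{0..}. of_nat (snd (snd y))
                        * emeasure anc_driver {\<omega> \<in> space anc_driver. anc_pos \<rho> (l, m, n) \<omega> u = y}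
                      \<partial>lborel)
              \<partial>count_space (UNIV - {(0, 0, 0)} - anc_S))"
  using part1[OF assms(1)] part2[OF assms(1)] by simp

end
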